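(* Let $G$ be a finite group and $H$ a core-free subgroup of $G$ contained in a normal subgroup $N$ of $G$ such that $[N:H]=2$. Then $N$ is an elementary abelian $2$-group.
   Context: A subgroup $H$ of $G$ is core-free if it contains no nontrivial normal subgroup of $G$. *)

theory Defs
  imports "HOL-Algebra.Algebra"
begin

definition core_free :: "('a, 'b) monoid_scheme \<Rightarrow> 'a set \<Rightarrow> bool" where
  "core_free G H \<longleftrightarrow> (\<forall>K. K \<lhd> G \<and> K \<subseteq> H \<longrightarrow> K = {\<one>\<^bsub>G\<^esub>})"

definition elementary_abelian_2_group :: "('a, 'b) monoid_scheme \<Rightarrow> 'a set \<Rightarrow> bool" where
  "elementary_abelian_2_group G N \<longleftrightarrow>
     (\<forall>x\<in>N. \<forall>y\<in>N. x \<otimes>\<^bsub>G\<^esub> y = y \<otimes>\<^bsub>G\<^esub> x) \<and> (\<forall>x\<in>N. x \<otimes>\<^bsub>G\<^esub> x = \<one>\<^bsub>G\<^esub>)"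

end

theory Submission
  imports Defs
begin

lemma rcosets_sub_eq:
  fixes G (structure)
  shows "rcosets\<^bsub>G\<lparr>carrier := N\<rparr>\<^esub> H = (\<lambda>a. H #> a) ` N"
  unfolding RCOSETS_def r_coset_def by auto

lemma sq_in_H:
  fixes G (structure)
  assumes "group G" "subgroup H G" "N \<lhd> G" "H \<subseteq> N"
    and card: "card (rcosets\<^bsub>G\<lparr>carrier := N\<rparr>\<^esub> H) = 2"
    and y: "y \<in> N"
  shows "y \<otimes> y \<in> H"
proof (rule ccontr)
  assume nyy: "y \<otimes> y \<notin> H"
  interpret group G by fact
  have NG: "subgroup N G" using assms(3) by (rule normal_imp_subgroup)
  have yG: "y \<in> carrier G" using subgroup.mem_carrier[OF NG y] .
  have HG: "H \<subseteq> carrier G" using subgroup.subset[OF assms(2)] .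
  have yyN: "y \<otimes> y \<in> N" using subgroup.m_closed[OF NG y y] .
  have oneN: "\<one> \<in> N" using subgroup.one_closed[OF NG] .
  let ?S = "(\<lambda>a. H #> a) ` N"
  have S: "card ?S = 2" using card by (simp only: rcosets_sub_eq)
  have fin: "finite ?S" using S by (intro card_ge_0_finite) simp
  have ny: "y \<notin> H"
  proof
    assume "y \<in> H" then show False using nyy subgroup.m_closed[OF assms(2)] by simp
  qed
  have mem: "\<And>a. a \<in> carrier G \<Longrightarrow> a \<in> H #> a"
  proof -
    fix a assume a: "a \<in> carrier G"
    have "\<one> \<otimes> a \<in> H #> a" unfolding r_coset_def using subgroup.one_closed[OF assms(2)] by (rule UN_I) simp
    then show "a \<in> H #> a" using a by simp
  qed
  have H1: "H #> \<one> = H" using coset_mult_one[OF HG] .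
  have d1: "H #> y \<noteq> H" using mem[OF yG] ny by metis
  have d2: "H #> (y \<otimes> y) \<noteq> H" using mem[of "y \<otimes> y"] yG nyy by (metis m_closed)
  have d3: "H #> (y \<otimes> y) \<noteq> H #> y"
  proof
    assume e: "H #> (y \<otimes> y) = H #> y"
    have "y \<otimes> y \<in> H #> y" using e mem[of "y \<otimes> y"] yG by (metis m_closed)
    then obtain h where h: "h \<in> H" "y \<otimes> y = h \<otimes> y" unfolding r_coset_def by blast
    have "y = h" using h(2) HG h(1) yG r_cancel by (metis subsetD)
    then show False using ny h(1) by simp
  qed
  have sub: "{H, H #> y, H #> (y \<otimes> y)} \<subseteq> ?S"
  proof -
    have "H #> \<one> \<in> ?S" "H #> y \<in> ?S" "H #> (y \<otimes> y) \<in> ?S"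
      using oneN y yyN by blast+
    then show ?thesis using H1 by simp
  qed
  have "card {H, H #> y, H #> (y \<otimes> y)} = 3" using d1 d2 d3 by simp
  moreover have "card {H, H #> y, H #> (y \<otimes> y)} \<le> card ?S" using card_mono[OF fin sub] .
  ultimately show False using S by simp
qed

theorem mainTheorem5:
  fixes G (structure)
  assumes "group G" and "finite (carrier G)"
    and "subgroup H G" and "core_free G H"
    and "N \<lhd> G" and "H \<subseteq> N"
    and "card (rcosets\<^bsub>G\<lparr>carrier := N\<rparr>\<^esub> H) = 2"
  shows "elementary_abelian_2_group G N"
proof -
  interpret group G by fact
  have NG: "subgroup N G" using assms(5) by (rule normal_imp_subgroup)
  have NC: "N \<subseteq> carrier G" using subgroup.subset[OF NG] .
  have HG: "H \<subseteq> carrier G" using subgroup.subset[OF assms(3)] .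
  have sq: "\<And>y. y \<in> N \<Longrightarrow> y \<otimes> y \<in> H" by (rule sq_in_H[OF assms(1,3,5,6,7)])
  define K where "K = {z \<in> carrier G. \<forall>g\<in>carrier G. inv g \<otimes> z \<otimes> g \<in> H}"
  have conjmult: "\<And>g a b. g \<in> carrier G \<Longrightarrow> a \<in> carrier G \<Longrightarrow> b \<in> carrier G \<Longrightarrow>
      inv g \<otimes> (a \<otimes> b) \<otimes> g = (inv g \<otimes> a \<otimes> g) \<otimes> (inv g \<otimes> b \<otimes> g)"
  proof -
    fix g a b assume g: "g \<in> carrier G" and a: "a \<in> carrier G" and b: "b \<in> carrier G"
    have c: "g \<otimes> (inv g \<otimes> (b \<otimes> g)) = b \<otimes> g"
      using g b by (simp add: m_assoc[symmetric])
    show "inv g \<otimes> (a \<otimes> b) \<otimes> g = (inv g \<otimes> a \<otimes> g) \<otimes> (inv g \<otimes> b \<otimes> g)"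
      using g a b c by (simp add: m_assoc)
  qed
  have conjinv: "\<And>g a. g \<in> carrier G \<Longrightarrow> a \<in> carrier G \<Longrightarrow>
      inv g \<otimes> inv a \<otimes> g = inv (inv g \<otimes> a \<otimes> g)"
    by (simp add: inv_mult_group m_assoc)
  have KH: "K \<subseteq> H"
  proof
    fix z assume "z \<in> K"
    then have "inv \<one> \<otimes> z \<otimes> \<one> \<in> H" "z \<in> carrier G" unfolding K_def by auto
    then show "z \<in> H" by simp
  qed
  have Ksub: "subgroup K G"
  proof (rule subgroupI)
    show "K \<subseteq> carrier G" unfolding K_def by auto
    have "\<one> \<in> K" unfolding K_def using assms(3) subgroup.one_closed by (auto simp: m_assoc)
    then show "K \<noteq> {}" by blast
  next
    fix a assume a: "a \<in> K"
    then have aG: "a \<in> carrier G" unfolding K_def by auto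
    show "inv a \<in> K" unfolding K_def
    proof (intro CollectI conjI ballI)
      show "inv a \<in> carrier G" using aG by simp
      fix g assume g: "g \<in> carrier G"
      have "inv g \<otimes> a \<otimes> g \<in> H" using a g unfolding K_def by auto
      then show "inv g \<otimes> inv a \<otimes> g \<in> H" using conjinv[OF g aG] assms(3) subgroup.m_inv_closed by metis
    qed
  next
    fix a b assume a: "a \<in> K" and b: "b \<in> K"
    then have aG: "a \<in> carrier G" and bG: "b \<in> carrier G" unfolding K_def by auto
    show "a \<otimes> b \<in> K" unfolding K_def
    proof (intro CollectI conjI ballI)
      show "a \<otimes> b \<in> carrier G" using aG bG by simp
      fix g assume g: "g \<in> carrier G"
      have "inv g \<otimes> a \<otimes> g \<in> H" "inv g \<otimes> b \<otimes> g \<in> H" using a b g unfolding K_def by auto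
      then show "inv g \<otimes> (a \<otimes> b) \<otimes> g \<in> H" using conjmult[OF g aG bG] assms(3) subgroup.m_closed by metis
    qed
  qed
  have Knorm: "K \<lhd> G"
  proof (subst normal_inv_iff, intro conjI ballI Ksub)
    fix x z assume x: "x \<in> carrier G" and z: "z \<in> K"
    then have zG: "z \<in> carrier G" unfolding K_def by auto
    show "x \<otimes> z \<otimes> inv x \<in> K" unfolding K_def
    proof (intro CollectI conjI ballI)
      show "x \<otimes> z \<otimes> inv x \<in> carrier G" using x zG by simp
      fix g assume g: "g \<in> carrier G"
      have g': "inv x \<otimes> g \<in> carrier G" using x g by simp
      have "inv (inv x \<otimes> g) \<otimes> z \<otimes> (inv x \<otimes> g) \<in> H" using z g' unfolding K_def by auto
      moreover have "inv (inv x \<otimes> g) \<otimes> z \<otimes> (inv x \<otimes> g) = inv g \<otimes> (x \<otimes> z \<otimes> inv x) \<otimes> g"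
        using x g zG by (simp add: inv_mult_group m_assoc)
      ultimately show "inv g \<otimes> (x \<otimes> z \<otimes> inv x) \<otimes> g \<in> H" by simp
    qed
  qed
  have K1: "K = {\<one>}" using assms(4) Knorm KH unfolding core_free_def by blast
  have sq1: "\<And>x. x \<in> N \<Longrightarrow> x \<otimes> x = \<one>"
  proof -
    fix x assume x: "x \<in> N"
    have xG: "x \<in> carrier G" using x NC by blast
    have "x \<otimes> x \<in> K" unfolding K_def
    proof (intro CollectI conjI ballI)
      show "x \<otimes> x \<in> carrier G" using xG by simp
      fix g assume g: "g \<in> carrier G"
      have c: "inv g \<otimes> x \<otimes> g \<in> N"
      proof -
        have "inv g \<otimes> x \<otimes> inv (inv g) \<in> N" using assms(5) x g inv_closed unfolding normal_inv_iff by blast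
        then show ?thesis using g by simp
      qed
      show "inv g \<otimes> (x \<otimes> x) \<otimes> g \<in> H" using sq[OF c] conjmult[OF g xG xG] by simp
    qed
    then show "x \<otimes> x = \<one>" using K1 by simp
  qed
  show ?thesis unfolding elementary_abelian_2_group_def
  proof (intro conjI ballI sq1)
    fix x y assume x: "x \<in> N" and y: "y \<in> N"
    have xG: "x \<in> carrier G" and yG: "y \<in> carrier G" using x y NC by auto
    have xy: "x \<otimes> y \<in> N" using subgroup.m_closed[OF NG x y] .
    have ix: "inv x = x" using sq1[OF x] xG inv_equality by blast
    have iy: "inv y = y" using sq1[OF y] yG inv_equality by blast
    have "inv (x \<otimes> y) = x \<otimes> y" using sq1[OF xy] xG yG inv_equality by blast
    then show "x \<otimes> y = y \<otimes> x" using inv_mult_group[OF xG yG] ix iy by simp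
  qed
qed

end
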